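(* Let $\mathcal{L}(\vec\theta)=\operatorname{Tr}[U(\vec\theta)\rho U^\dagger(\vec\theta)O]$ be a loss function on $n$ qubits depending on $m$ independent real parameters. Let $\vec\phi\in\mathbb{R}^m$ and $r_{\mathrm{full}}>0$, and assume $\mathbb{E}_{\vec\theta\sim\mathcal{U}(\vec\phi,r_{\mathrm{full}})}[\mathcal{L}(\vec\theta)]=0$, that $m=cn$ for a constant $c>1$, and that $$\operatorname{Var}_{\vec\theta\sim\mathcal{U}(\vec\phi,r_{\mathrm{full}})}[\mathcal{L}(\vec\theta)]\in\mathcal{O}(b^{-n})$$ for some $b>1$. Then for every $r$ with $r_{\mathrm{full}}/b^{1/c}<r\le r_{\mathrm{full}}$, $$\operatorname{Var}_{\vec\theta\sim\mathcal{U}(\vec\phi,r)}[\mathcal{L}(\vec\theta)]\in\mathcal{O}(\beta^{-n})$$ for some $\beta>1$.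
   Context: $\rho$ is an $n$-qubit density operator, $O$ a Hermitian observable, $U(\vec\theta)$ a parametrized quantum circuit. $\mathcal{U}(\vec\phi,r)$ denotes the uniform distribution over the hypercube $\{\vec\theta:\theta_i\in[\phi_i-r,\phi_i+r],\ i=1,\dots,m\}$. Asymptotic statements refer to a family of instances indexed by $n$. *)

theory Defs
  imports "HOL-Analysis.Analysis" "HOL-Library.Landau_Symbols" "Jordan_Normal_Form.Matrix"
begin

definition mat_trace :: "complex mat \<Rightarrow> complex" where
  "mat_trace A = (\<Sum>i<dim_row A. A $$ (i, i))"

definition dagger :: "complex mat \<Rightarrow> complex mat" where
  "dagger A = mat (dim_col A) (dim_row A) (\<lambda>(i, j). cnj (A $$ (j, i)))"

definition hermitian_mat :: "nat \<Rightarrow> complex mat \<Rightarrow> bool" where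
  "hermitian_mat d A \<longleftrightarrow> A \<in> carrier_mat d d \<and> dagger A = A"

definition unitary_mat :: "nat \<Rightarrow> complex mat \<Rightarrow> bool" where
  "unitary_mat d U \<longleftrightarrow> U \<in> carrier_mat d d \<and> dagger U * U = 1\<^sub>m d \<and> U * dagger U = 1\<^sub>m d"

definition psd_mat :: "nat \<Rightarrow> complex mat \<Rightarrow> bool" where
  "psd_mat d A \<longleftrightarrow> hermitian_mat d A \<and>
     (\<forall>v \<in> carrier_vec d. Im ((A *\<^sub>v v) \<bullet>c v) = 0 \<and> 0 \<le> Re ((A *\<^sub>v v) \<bullet>c v))"

definition density_op :: "nat \<Rightarrow> complex mat \<Rightarrow> bool" where
  "density_op d \<rho> \<longleftrightarrow> psd_mat d \<rho> \<and> mat_trace \<rho> = 1"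

text \<open>L(theta) = Tr[U(theta) rho U(theta)^dagger O]; it is real for Hermitian O and
  density rho, we take the real part to have a real-valued function.\<close>
definition loss :: "((nat \<Rightarrow> real) \<Rightarrow> complex mat) \<Rightarrow> complex mat \<Rightarrow> complex mat
                     \<Rightarrow> (nat \<Rightarrow> real) \<Rightarrow> real" where
  "loss U \<rho> Obs \<theta> = Re (mat_trace (U \<theta> * \<rho> * dagger (U \<theta>) * Obs))"

text \<open>Parameter vectors in R^m are the extensional functions on {..<m}.
  U(phi, r) is the uniform distribution on the hypercube
  {theta. theta_i in [phi_i - r, phi_i + r], i < m}.\<close>
definition param_space :: "nat \<Rightarrow> (nat \<Rightarrow> real) measure" where
  "param_space m = PiM {..<m} (\<lambda>_. lborel)"

definition hypercube :: "nat \<Rightarrow> (nat \<Rightarrow> real) \<Rightarrow> real \<Rightarrow> (nat \<Rightarrow> real) set" where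
  "hypercube m \<phi> r = PiE {..<m} (\<lambda>i. {\<phi> i - r .. \<phi> i + r})"

definition unif_cube :: "nat \<Rightarrow> (nat \<Rightarrow> real) \<Rightarrow> real \<Rightarrow> (nat \<Rightarrow> real) measure" where
  "unif_cube m \<phi> r = uniform_measure (param_space m) (hypercube m \<phi> r)"

definition expect :: "'a measure \<Rightarrow> ('a \<Rightarrow> real) \<Rightarrow> real" where
  "expect M f = (\<integral>x. f x \<partial>M)"

definition var :: "'a measure \<Rightarrow> ('a \<Rightarrow> real) \<Rightarrow> real" where
  "var M f = (\<integral>x. (f x - expect M f)\<^sup>2 \<partial>M)"

end

theory Submission imports Defs "HOL-Probability.Probability_Measure" begin

lemma cube_sets: "hypercube M \<phi> r \<in> sets (param_space M)"
  unfolding hypercube_def param_space_def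
  by (rule sets_PiM_I_finite) auto

lemma cube_emeasure:
  assumes "r > 0"
  shows "emeasure (param_space M) (hypercube M \<phi> r) = ennreal ((2*r)^M)"
proof -
  interpret product_sigma_finite "\<lambda>_::nat. lborel" by unfold_locales
  have "emeasure (param_space M) (hypercube M \<phi> r) = (\<Prod>i<M. emeasure lborel {\<phi> i - r .. \<phi> i + r})"
    unfolding hypercube_def param_space_def by (rule emeasure_PiM) auto
  also have "\<dots> = (\<Prod>i<M. ennreal (2*r))" using assms by (intro prod.cong) auto
  also have "\<dots> = ennreal ((2*r)^M)" using assms by (simp add: prod_ennreal ennreal_power)
  finally show ?thesis .
qed

lemma cube_density:
  assumes "r > 0"
  shows "unif_cube M \<phi> r = density (param_space M) (\<lambda>x. ennreal (indicator (hypercube M \<phi> r) x / (2*r)^M))"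
  unfolding unif_cube_def uniform_measure_def cube_emeasure[OF assms]
proof -
  have "\<And>x. indicator (hypercube M \<phi> r) x / ennreal ((2*r)^M) = ennreal (indicator (hypercube M \<phi> r) x / (2*r)^M)"
    using divide_ennreal[of 1 "(2*r)^M"] assms by (case_tac "x \<in> hypercube M \<phi> r") auto
  then show "density (param_space M) (\<lambda>x. indicator (hypercube M \<phi> r) x / ennreal ((2 * r) ^ M)) =
    density (param_space M) (\<lambda>x. ennreal (indicator (hypercube M \<phi> r) x / (2 * r) ^ M))" by simp
qed

lemma cube_prob: "r > 0 \<Longrightarrow> prob_space (unif_cube M \<phi> r)"
  unfolding unif_cube_def
  by (rule prob_space_uniform_measure) (auto simp: cube_emeasure)

lemma meas_cube: "f \<in> borel_measurable (param_space M) \<Longrightarrow> f \<in> borel_measurable (unif_cube M \<phi> r)"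
  unfolding unif_cube_def using measurable_cong_sets[OF sets_uniform_measure refl] by blast

lemma cube_integral:
  assumes "r > 0" "g \<in> borel_measurable (param_space M)"
  shows "integral\<^sup>L (unif_cube M \<phi> r) g =
    integral\<^sup>L (param_space M) (\<lambda>x. (indicator (hypercube M \<phi> r) x / (2*r)^M) * g x)"
  unfolding cube_density[OF assms(1)] using assms cube_sets
  by (subst integral_density) (auto simp: indicator_def)

lemma cube_integrable:
  assumes "r > 0" "g \<in> borel_measurable (param_space M)"
  shows "integrable (unif_cube M \<phi> r) g \<longleftrightarrow>
    integrable (param_space M) (\<lambda>x. (indicator (hypercube M \<phi> r) x / (2*r)^M) * g x)"
  unfolding cube_density[OF assms(1)] using assms cube_sets
  by (subst integrable_density) (auto simp: indicator_def)

lemma cube_mono: "r \<le> rf \<Longrightarrow> hypercube M \<phi> r \<subseteq> hypercube M \<phi> rf"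
  unfolding hypercube_def by (intro PiE_mono) auto

lemma scale_aux: "(0::real) < r \<Longrightarrow> 0 < rf \<Longrightarrow> (x::real) / (2*r)^M = (rf/r)^M * (x / (2*rf)^M)"
proof -
  assume a: "(0::real) < r" "0 < rf"
  have "(rf/r)^M * (x / (2*rf)^M) = (rf^M * x) / (r^M * (2^M * rf^M))"
    by (simp add: power_divide power_mult_distrib)
  also have "\<dots> = x / (r^M * 2^M)" using a by simp
  also have "\<dots> = x / (2*r)^M" by (simp add: power_mult_distrib mult.commute)
  finally show ?thesis by simp
qed

lemma key:
  fixes f :: "(nat \<Rightarrow> real) \<Rightarrow> real"
  assumes r: "0 < r" "r \<le> rf" and fm: "f \<in> borel_measurable (param_space M)"
    and K: "\<And>x. \<bar>f x\<bar> \<le> K" and e0: "expect (unif_cube M \<phi> rf) f = 0"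
  shows "var (unif_cube M \<phi> r) f \<le> (rf/r)^M * var (unif_cube M \<phi> rf) f"
proof -
  have rf: "rf > 0" using r by simp
  have f2m: "(\<lambda>x. (f x)^2) \<in> borel_measurable (param_space M)" using fm by measurable
  have intg: "integrable (unif_cube M \<phi> s) f" "integrable (unif_cube M \<phi> s) (\<lambda>x. (f x)^2)"
    if "s > 0" for s
  proof -
    interpret prob_space "unif_cube M \<phi> s" using cube_prob[OF that] .
    show "integrable (unif_cube M \<phi> s) f"
      by (rule integrable_const_bound[where B=K]) (auto intro: K meas_cube fm)
    show "integrable (unif_cube M \<phi> s) (\<lambda>x. (f x)^2)"
    proof (rule integrable_const_bound[where B="K^2"])
      show "AE x in unif_cube M \<phi> s. norm ((f x)^2) \<le> K^2"
      proof (intro AE_I2)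
        fix x
        have "\<bar>f x\<bar> ^ 2 \<le> K ^ 2" by (rule power_mono[OF K abs_ge_zero])
        then show "norm ((f x)^2) \<le> K^2" by simp
      qed
    qed (rule meas_cube[OF f2m])
  qed
  interpret prob_space "unif_cube M \<phi> r" using cube_prob[OF r(1)] .
  have "var (unif_cube M \<phi> r) f = expectation (\<lambda>x. (f x)^2) - (expectation f)^2"
    unfolding var_def expect_def using intg[OF r(1)] by (rule variance_eq)
  also have "\<dots> \<le> expectation (\<lambda>x. (f x)^2)" by simp
  also have "\<dots> = integral\<^sup>L (param_space M) (\<lambda>x. (indicator (hypercube M \<phi> r) x / (2*r)^M) * (f x)^2)"
    by (rule cube_integral[OF r(1) f2m])
  also have "\<dots> \<le> integral\<^sup>L (param_space M) (\<lambda>x. (rf/r)^M * ((indicator (hypercube M \<phi> rf) x / (2*rf)^M) * (f x)^2))"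
  proof (rule integral_mono)
    show "integrable (param_space M) (\<lambda>x. (indicator (hypercube M \<phi> r) x / (2*r)^M) * (f x)^2)"
      by (rule cube_integrable[OF r(1) f2m, THEN iffD1, OF intg(2)[OF r(1)]])
    show "integrable (param_space M) (\<lambda>x. (rf/r)^M * ((indicator (hypercube M \<phi> rf) x / (2*rf)^M) * (f x)^2))"
      by (rule integrable_mult_right, rule cube_integrable[OF rf f2m, THEN iffD1, OF intg(2)[OF rf]])
    fix x
    have "indicator (hypercube M \<phi> r) x \<le> (indicator (hypercube M \<phi> rf) x :: real)"
      using cube_mono[OF r(2)] unfolding indicator_def by auto
    then have "indicator (hypercube M \<phi> r) x / (2*r)^M \<le> indicator (hypercube M \<phi> rf) x / (2*r)^M"
      using r(1) by (intro divide_right_mono) simp_all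
    also have "\<dots> = (rf/r)^M * (indicator (hypercube M \<phi> rf) x / (2*rf)^M)"
      by (rule scale_aux[OF r(1) rf])
    finally have "indicator (hypercube M \<phi> r) x / (2*r)^M \<le> (rf/r)^M * (indicator (hypercube M \<phi> rf) x / (2*rf)^M)" .
    then have "(indicator (hypercube M \<phi> r) x / (2*r)^M) * (f x)^2 \<le> ((rf/r)^M * (indicator (hypercube M \<phi> rf) x / (2*rf)^M)) * (f x)^2"
      by (rule mult_right_mono) simp
    then show "(indicator (hypercube M \<phi> r) x / (2*r)^M) * (f x)^2 \<le> (rf/r)^M * ((indicator (hypercube M \<phi> rf) x / (2*rf)^M) * (f x)^2)"
      by (simp only: mult.assoc)
  qed
  also have "\<dots> = (rf/r)^M * integral\<^sup>L (param_space M) (\<lambda>x. (indicator (hypercube M \<phi> rf) x / (2*rf)^M) * (f x)^2)"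
    by (rule integral_mult_right_zero)
  also have "\<dots> = (rf/r)^M * var (unif_cube M \<phi> rf) f"
  proof -
    have "var (unif_cube M \<phi> rf) f = integral\<^sup>L (unif_cube M \<phi> rf) (\<lambda>x. (f x)^2)"
      unfolding var_def e0 by simp
    then show ?thesis using cube_integral[OF rf f2m] by simp
  qed
  finally show ?thesis .
qed

lemma mult_index: "A \<in> carrier_mat d d \<Longrightarrow> B \<in> carrier_mat d d \<Longrightarrow> i < d \<Longrightarrow> j < d \<Longrightarrow>
  (A * B) $$ (i,j) = (\<Sum>k<d. A $$ (i,k) * B $$ (k,j))"
  by (simp add: scalar_prod_def atLeast0LessThan)

lemma trace_expand:
  assumes "A \<in> carrier_mat d d" "B \<in> carrier_mat d d" "C \<in> carrier_mat d d" "D \<in> carrier_mat d d"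
  shows "mat_trace (A * B * C * D) =
    (\<Sum>i<d. \<Sum>j<d. \<Sum>l<d. \<Sum>k<d. A $$ (i,k) * B $$ (k,l) * C $$ (l,j) * D $$ (j,i))"
proof -
  have AB: "A * B \<in> carrier_mat d d" and ABC: "A * B * C \<in> carrier_mat d d" using assms by auto
  have "mat_trace (A * B * C * D) = (\<Sum>i<d. (A * B * C * D) $$ (i,i))"
    unfolding mat_trace_def using ABC assms by simp
  also have "\<dots> = (\<Sum>i<d. \<Sum>j<d. (A * B * C) $$ (i,j) * D $$ (j,i))"
    using ABC assms by (intro sum.cong refl) (simp only: mult_index[OF ABC assms(4)] lessThan_iff)
  also have "\<dots> = (\<Sum>i<d. \<Sum>j<d. \<Sum>l<d. (A * B) $$ (i,l) * C $$ (l,j) * D $$ (j,i))"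
    using AB assms by (intro sum.cong refl) (simp only: mult_index[OF AB assms(3)] lessThan_iff sum_distrib_right)
  also have "\<dots> = (\<Sum>i<d. \<Sum>j<d. \<Sum>l<d. \<Sum>k<d. A $$ (i,k) * B $$ (k,l) * C $$ (l,j) * D $$ (j,i))"
    using assms by (intro sum.cong refl) (simp only: mult_index[OF assms(1,2)] lessThan_iff sum_distrib_right)
  finally show ?thesis .
qed

lemma dagger_index: "U \<in> carrier_mat d d \<Longrightarrow> i < d \<Longrightarrow> j < d \<Longrightarrow> dagger U $$ (i,j) = cnj (U $$ (j,i))"
  unfolding dagger_def by auto

lemma dagger_carrier: "U \<in> carrier_mat d d \<Longrightarrow> dagger U \<in> carrier_mat d d"
  unfolding dagger_def by auto

lemma unit_entry:
  assumes "unitary_mat d U" "i < d" "k < d"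
  shows "cmod (U $$ (i,k)) \<le> 1"
proof -
  have U: "U \<in> carrier_mat d d" and e: "dagger U * U = 1\<^sub>m d" using assms(1) unfolding unitary_mat_def by auto
  have "(dagger U * U) $$ (k,k) = 1" using e assms by simp
  moreover have "(dagger U * U) $$ (k,k) = (\<Sum>j<d. cnj (U $$ (j,k)) * U $$ (j,k))"
    using U assms dagger_carrier[OF U] by (auto simp: scalar_prod_def dagger_index atLeast0LessThan intro!: sum.cong)
  moreover have "\<dots> = of_real (\<Sum>j<d. (cmod (U $$ (j,k)))^2)"
  proof -
    have "\<And>z. cnj z * z = complex_of_real ((cmod z)^2)"
      using complex_norm_square by (metis mult.commute of_real_power)
    then show ?thesis by (simp only: of_real_sum)
  qed
  ultimately have "(\<Sum>j<d. (cmod (U $$ (j,k)))^2) = 1" by (metis of_real_eq_1_iff)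
  moreover have "(cmod (U $$ (i,k)))^2 \<le> (\<Sum>j<d. (cmod (U $$ (j,k)))^2)"
    using assms(2) by (intro member_le_sum) auto
  ultimately have "(cmod (U $$ (i,k)))^2 \<le> 1" by simp
  then show ?thesis by (simp add: power_le_one_iff abs_le_square_iff)
qed

lemma loss_props:
  assumes U: "\<And>\<theta>. unitary_mat d (U \<theta>)" and rho: "\<rho> \<in> carrier_mat d d" and O: "Obs \<in> carrier_mat d d"
    and mU: "\<And>i j. i < d \<Longrightarrow> j < d \<Longrightarrow> (\<lambda>\<theta>. U \<theta> $$ (i,j)) \<in> borel_measurable Mx"
  shows "loss U \<rho> Obs \<in> borel_measurable Mx"
    and "\<bar>loss U \<rho> Obs \<theta>\<bar> \<le> (\<Sum>i<d. \<Sum>j<d. \<Sum>l<d. \<Sum>k<d. cmod (\<rho> $$ (k,l)) * cmod (Obs $$ (j,i)))"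
proof -
  have Uc: "\<And>\<theta>. U \<theta> \<in> carrier_mat d d" using U unfolding unitary_mat_def by auto
  have ex: "loss U \<rho> Obs \<theta> = Re (\<Sum>i<d. \<Sum>j<d. \<Sum>l<d. \<Sum>k<d.
      U \<theta> $$ (i,k) * \<rho> $$ (k,l) * cnj (U \<theta> $$ (j,l)) * Obs $$ (j,i))" for \<theta>
    unfolding loss_def trace_expand[OF Uc rho dagger_carrier[OF Uc] O]
    by (intro arg_cong[where f=Re] sum.cong refl) (simp add: dagger_index[OF Uc])
  have mc: "(\<lambda>\<theta>. cnj (U \<theta> $$ (i,j))) \<in> borel_measurable Mx" if "i < d" "j < d" for i j
    by (rule measurable_compose[OF mU[OF that] borel_measurable_continuous_onI]) (intro continuous_intros)
  have "(\<lambda>\<theta>. Re (\<Sum>i<d. \<Sum>j<d. \<Sum>l<d. \<Sum>k<d.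
      U \<theta> $$ (i,k) * \<rho> $$ (k,l) * cnj (U \<theta> $$ (j,l)) * Obs $$ (j,i))) \<in> borel_measurable Mx"
    by (rule measurable_compose[OF _ borel_measurable_Re])
       (intro borel_measurable_sum borel_measurable_times borel_measurable_const mU mc; simp)
  then show "loss U \<rho> Obs \<in> borel_measurable Mx" by (subst ext[OF ex])
  have "\<bar>loss U \<rho> Obs \<theta>\<bar> \<le> cmod (\<Sum>i<d. \<Sum>j<d. \<Sum>l<d. \<Sum>k<d.
      U \<theta> $$ (i,k) * \<rho> $$ (k,l) * cnj (U \<theta> $$ (j,l)) * Obs $$ (j,i))"
    unfolding ex by (rule abs_Re_le_cmod)
  also have "\<dots> \<le> (\<Sum>i<d. \<Sum>j<d. \<Sum>l<d. \<Sum>k<d.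
      cmod (U \<theta> $$ (i,k) * \<rho> $$ (k,l) * cnj (U \<theta> $$ (j,l)) * Obs $$ (j,i)))"
    by (intro order.trans[OF norm_sum] sum_mono) auto
  also have "\<dots> \<le> (\<Sum>i<d. \<Sum>j<d. \<Sum>l<d. \<Sum>k<d. cmod (\<rho> $$ (k,l)) * cmod (Obs $$ (j,i)))"
  proof (intro sum_mono)
    fix i j l k assume "i \<in> {..<d}" "j \<in> {..<d}" "l \<in> {..<d}" "k \<in> {..<d}"
    then have a: "cmod (U \<theta> $$ (i,k)) \<le> 1" "cmod (U \<theta> $$ (j,l)) \<le> 1"
      using unit_entry[OF U] by auto
    have "cmod (U \<theta> $$ (i,k) * \<rho> $$ (k,l) * cnj (U \<theta> $$ (j,l)) * Obs $$ (j,i)) =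
      cmod (U \<theta> $$ (i,k)) * cmod (U \<theta> $$ (j,l)) * (cmod (\<rho> $$ (k,l)) * cmod (Obs $$ (j,i)))"
      by (simp add: norm_mult)
    also have "\<dots> \<le> 1 * 1 * (cmod (\<rho> $$ (k,l)) * cmod (Obs $$ (j,i)))"
      using a by (intro mult_right_mono mult_mono) auto
    finally show "cmod (U \<theta> $$ (i,k) * \<rho> $$ (k,l) * cnj (U \<theta> $$ (j,l)) * Obs $$ (j,i))
       \<le> cmod (\<rho> $$ (k,l)) * cmod (Obs $$ (j,i))" by simp
  qed
  finally show "\<bar>loss U \<rho> Obs \<theta>\<bar> \<le> (\<Sum>i<d. \<Sum>j<d. \<Sum>l<d. \<Sum>k<d. cmod (\<rho> $$ (k,l)) * cmod (Obs $$ (j,i)))" .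
qed

theorem proposition1:
  fixes \<rho> Obs :: "nat \<Rightarrow> complex mat"
    and U :: "nat \<Rightarrow> (nat \<Rightarrow> real) \<Rightarrow> complex mat"
    and m :: "nat \<Rightarrow> nat"
    and \<phi> :: "nat \<Rightarrow> nat \<Rightarrow> real"
    and c b r_full r :: real
  assumes rho: "\<And>n. density_op (2 ^ n) (\<rho> n)"
    and obs: "\<And>n. hermitian_mat (2 ^ n) (Obs n)"
    and unit: "\<And>n \<theta>. unitary_mat (2 ^ n) (U n \<theta>)"
    and meas: "\<And>n i j. i < 2 ^ n \<Longrightarrow> j < 2 ^ n \<Longrightarrow>
                 (\<lambda>\<theta>. U n \<theta> $$ (i, j)) \<in> borel_measurable (param_space (m n))"
    and c: "c > 1" and m: "\<And>n. real (m n) = c * real n"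
    and r_full: "r_full > 0"
    and mean0: "\<And>n. expect (unif_cube (m n) (\<phi> n) r_full) (loss (U n) (\<rho> n) (Obs n)) = 0"
    and b: "b > 1"
    and var_full: "(\<lambda>n. var (unif_cube (m n) (\<phi> n) r_full) (loss (U n) (\<rho> n) (Obs n)))
                     \<in> O(\<lambda>n. b powr - real n)"
    and r: "r_full / b powr (1 / c) < r" "r \<le> r_full"
  shows "\<exists>\<beta>>1. (\<lambda>n. var (unif_cube (m n) (\<phi> n) r) (loss (U n) (\<rho> n) (Obs n)))
                     \<in> O(\<lambda>n. \<beta> powr - real n)"
proof -
  define q where "q = r_full / r"
  have bc: "b powr (1/c) > 0" using b by simp
  have r0: "r > 0" using r(1) r_full bc by (smt (verit) divide_pos_pos)
  have q1: "q \<ge> 1" and q0: "q > 0" using r r0 r_full unfolding q_def by auto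
  have "r_full < r * b powr (1/c)" using r(1) pos_divide_less_eq[OF bc] by blast
  then have "q < b powr (1/c)" unfolding q_def using pos_divide_less_eq[OF r0] by (simp add: mult.commute)
  then have "q powr c < (b powr (1/c)) powr c" using q0 c by (intro powr_less_mono2) auto
  also have "\<dots> = b" using c b by (simp add: powr_powr)
  finally have qb: "q powr c < b" .
  define \<beta> where "\<beta> = b / q powr c"
  have \<beta>1: "\<beta> > 1" unfolding \<beta>_def using qb q0 by simp
  define Vr where "Vr = (\<lambda>n. var (unif_cube (m n) (\<phi> n) r) (loss (U n) (\<rho> n) (Obs n)))"
  define Vf where "Vf = (\<lambda>n. var (unif_cube (m n) (\<phi> n) r_full) (loss (U n) (\<rho> n) (Obs n)))"
  have bound: "Vr n \<le> q powr (c * real n) * Vf n" for n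
  proof -
    have rc: "\<rho> n \<in> carrier_mat (2^n) (2^n)" using rho[of n]
      unfolding density_op_def psd_mat_def hermitian_mat_def by auto
    have oc: "Obs n \<in> carrier_mat (2^n) (2^n)" using obs[of n] unfolding hermitian_mat_def by auto
    note lp = loss_props[OF unit rc oc meas]
    have "Vr n \<le> q ^ m n * Vf n" unfolding Vr_def Vf_def q_def
      by (rule key[OF r0 r(2) lp(1) lp(2) mean0])
    also have "q ^ m n = q powr (c * real n)" by (simp only: m[symmetric] powr_realpow[OF q0])
    finally show ?thesis .
  qed
  have Vr0: "Vr n \<ge> 0" for n unfolding Vr_def var_def by (intro integral_nonneg_AE) auto
  have Vf0: "Vf n \<ge> 0" for n unfolding Vf_def var_def by (intro integral_nonneg_AE) auto
  have eq: "q powr (c * real n) * b powr (- real n) = \<beta> powr (- real n)" for n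
    unfolding \<beta>_def using q0 b by (simp add: powr_divide powr_powr powr_minus field_simps)
  obtain C where C: "C > 0" "eventually (\<lambda>n. norm (Vf n) \<le> C * norm (b powr - real n)) at_top"
    using var_full unfolding Vf_def by (elim landau_o.bigE) auto
  have "eventually (\<lambda>n. norm (Vr n) \<le> C * norm (\<beta> powr - real n)) at_top"
    using C(2)
  proof eventually_elim
    case (elim n)
    have "norm (Vr n) = Vr n" using Vr0 by simp
    also have "\<dots> \<le> q powr (c * real n) * Vf n" by (rule bound)
    also have "\<dots> \<le> q powr (c * real n) * (C * b powr - real n)"
      using elim Vf0[of n] by (intro mult_left_mono) auto
    also have "\<dots> = C * \<beta> powr - real n" using eq[of n] by (simp add: algebra_simps)
    also have "\<dots> = C * norm (\<beta> powr - real n)" by simp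
    finally show ?case .
  qed
  then have "Vr \<in> O(\<lambda>n. \<beta> powr - real n)" by (rule landau_o.bigI[OF C(1)])
  then show ?thesis using \<beta>1 unfolding Vr_def by blast
qed

end
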